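(* Let $q$ be a prime power, $n\ge2$, and let $\mathrm{M}=\{(m_{i,j})\in\mathrm{H}_n(q^2): m_{i,i}=0 \text{ for all } 1\le i\le n\}$ be the additive $2$-code of Hermitian matrices with zero main diagonal. Then $\mathrm{M}$ is not a $t$-design for any $t$ with $1\le t\le n$.
   Context: For $a\in\mathbb{F}_{q^2}$ write $\bar a=a^q$; $A^*$ is the conjugate transpose; $\mathrm{H}_n(q^2)=\{A\in\mathbb{F}_{q^2}^{n\times n}:A^*=A\}$. Designs: fix a nontrivial character $\chi$ of $(\mathbb{F}_q,+)$, $\langle A,B\rangle=\chi(\mathrm{tr}(A^*B))$; $\mathrm{H}_k$ is the set of rank-$k$ matrices in $\mathrm{H}_n(q^2)$; $Q_k(i)=\sum_{A\in\mathrm{H}_k}\langle A,B\rangle$ for $B\in\mathrm{H}_i$; for $\mathrm{C}\subseteq\mathrm{H}_n(q^2)$ the inner distribution is $A_i=|\{(X,Y)\in\mathrm{C}^2:\mathrm{rk}(X-Y)=i\}|/|\mathrm{C}|$ and the dual inner distribution is $A'_k=\sum_iQ_k(i)A_i$; $\mathrm{C}$ is a $t$-design if $A'_1=\dots=A'_t=0$. *)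

theory Defs
  imports Complex_Main "Jordan_Normal_Form.DL_Rank"
begin

text \<open>Setting: 'a is a finite field with q^2 elements; conjugation is a \<mapsto> a^q;
  F_q is the fixed field {a. a^q = a}. Matrices are n x n Jordan_Normal_Form matrices.\<close>

definition conj_q :: "nat \<Rightarrow> 'a::field \<Rightarrow> 'a" where
  "conj_q q a = a ^ q"

definition Fq :: "nat \<Rightarrow> 'a::field set" where
  "Fq q = {a. a ^ q = a}"

definition conj_transpose :: "nat \<Rightarrow> 'a::field mat \<Rightarrow> 'a mat" where
  "conj_transpose q A = map_mat (conj_q q) (transpose_mat A)"

definition mat_trace :: "'a::comm_ring_1 mat \<Rightarrow> 'a" where
  "mat_trace A = (\<Sum>i<dim_row A. A $$ (i, i))"

definition mat_rank :: "nat \<Rightarrow> 'a::field mat \<Rightarrow> nat" where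
  "mat_rank n A = vec_space.rank n A"

definition herm :: "nat \<Rightarrow> nat \<Rightarrow> 'a::field mat set" where
  "herm q n = {A \<in> carrier_mat n n. conj_transpose q A = A}"

definition herm_rank :: "nat \<Rightarrow> nat \<Rightarrow> nat \<Rightarrow> 'a::field mat set" where
  "herm_rank q n k = {A \<in> herm q n. mat_rank n A = k}"

definition nontrivial_add_char :: "nat \<Rightarrow> ('a::field \<Rightarrow> complex) \<Rightarrow> bool" where
  "nontrivial_add_char q \<chi> \<longleftrightarrow>
     (\<forall>x\<in>Fq q. \<chi> x \<noteq> 0) \<and>
     (\<forall>x\<in>Fq q. \<forall>y\<in>Fq q. \<chi> (x + y) = \<chi> x * \<chi> y) \<and>
     (\<exists>x\<in>Fq q. \<chi> x \<noteq> 1)"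

definition pairing :: "nat \<Rightarrow> ('a::field \<Rightarrow> complex) \<Rightarrow> 'a mat \<Rightarrow> 'a mat \<Rightarrow> complex" where
  "pairing q \<chi> A B = \<chi> (mat_trace (conj_transpose q A * B))"

text \<open>Q_k(i) = sum over A in H_k of <A,B>, for (any, here a chosen) B in H_i.\<close>
definition Qnum :: "nat \<Rightarrow> nat \<Rightarrow> ('a::field \<Rightarrow> complex) \<Rightarrow> nat \<Rightarrow> nat \<Rightarrow> complex" where
  "Qnum q n \<chi> k i =
     (let B = (SOME B. B \<in> (herm_rank q n i :: 'a mat set))
      in \<Sum>A\<in>herm_rank q n k. pairing q \<chi> A B)"

definition inner_dist :: "nat \<Rightarrow> 'a::field mat set \<Rightarrow> nat \<Rightarrow> real" where
  "inner_dist n C i =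
     real (card {(X, Y). X \<in> C \<and> Y \<in> C \<and> mat_rank n (X - Y) = i}) / real (card C)"

definition dual_inner_dist :: "nat \<Rightarrow> nat \<Rightarrow> ('a::field \<Rightarrow> complex) \<Rightarrow> 'a mat set \<Rightarrow> nat \<Rightarrow> complex" where
  "dual_inner_dist q n \<chi> C k = (\<Sum>i\<le>n. Qnum q n \<chi> k i * complex_of_real (inner_dist n C i))"

definition is_t_design :: "nat \<Rightarrow> nat \<Rightarrow> ('a::field \<Rightarrow> complex) \<Rightarrow> nat \<Rightarrow> 'a mat set \<Rightarrow> bool" where
  "is_t_design q n \<chi> t C \<longleftrightarrow> (\<forall>k\<in>{1..t}. dual_inner_dist q n \<chi> C k = 0)"

definition zero_diag_herm :: "nat \<Rightarrow> nat \<Rightarrow> 'a::field mat set" where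
  "zero_diag_herm q n = {A \<in> herm q n. \<forall>i<n. A $$ (i, i) = 0}"

end

theory Submission
  imports Defs "HOL-Number_Theory.Residues"
begin


lemma fiber_card_bound:
  assumes "finite A" "\<And>b. card {a\<in>A. f a = b} \<le> k"
  shows "card A \<le> k * card (f ` A)"
proof -
  have e: "A = (\<Union>b\<in>f ` A. {a\<in>A. f a = b})" by auto
  have "card A = card (\<Union>b\<in>f ` A. {a\<in>A. f a = b})" using e by (rule arg_cong)
  also have "\<dots> \<le> (\<Sum>b\<in>f ` A. card {a\<in>A. f a = b})"
    by (rule card_UN_le) (use assms(1) in auto)
  also have "\<dots> \<le> (\<Sum>b\<in>f ` A. k)" by (rule sum_mono) (use assms(2) in auto)
  finally show ?thesis by (simp add: mult.commute)
qed

lemma image_eq_by_card: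
  assumes "finite A" "finite B" "f ` A \<subseteq> B" "\<And>b. card {a\<in>A. f a = b} \<le> k"
    "k * card B \<le> card A" "k > 0"
  shows "f ` A = B"
proof -
  have "card A \<le> k * card (f ` A)" by (rule fiber_card_bound[OF assms(1,4)])
  hence "k * card B \<le> k * card (f ` A)" using assms(5) by linarith
  hence "card B \<le> card (f ` A)" using assms(6) by simp
  moreover have "card (f ` A) \<le> card B" using assms(2,3) card_mono by blast
  ultimately show ?thesis using card_subset_eq[OF assms(2,3)] by simp
qed

lemma fiber_le_coset:
  fixes f :: "'a::field \<Rightarrow> 'a"
  assumes "finite K" "\<And>y0 a. y0 \<in> A \<Longrightarrow> a \<in> A \<Longrightarrow> f y0 = f a \<Longrightarrow> a \<in> g y0 ` K"
  shows "card {a\<in>A. f a = b} \<le> card K"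
proof (cases "\<exists>y0\<in>A. f y0 = b")
  case True
  then obtain y0 where y0: "y0 \<in> A" "f y0 = b" by blast
  have "{a\<in>A. f a = b} \<subseteq> g y0 ` K" using assms(2)[OF y0(1)] y0 by auto
  hence "card {a\<in>A. f a = b} \<le> card (g y0 ` K)"
    using assms(1) card_mono finite_imageI by blast
  also have "\<dots> \<le> card K" by (rule card_image_le[OF assms(1)])
  finally show ?thesis .
next
  case False
  hence e: "{a\<in>A. f a = b} = {}" by blast
  show ?thesis unfolding e by simp
qed

lemma pow_card_field: "(x::'a::{field,finite}) ^ card (UNIV :: 'a set) = x"
proof (cases "x = 0")
  case False
  have "x * (\<Prod>y\<in>UNIV-{0}. x * y) = x * x ^ (card (UNIV :: 'a set) - 1) * \<Prod>(UNIV-{0})"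
    by (simp add: prod.distrib mult_ac)
  also have "x * x ^ (card (UNIV :: 'a set) - 1) = x ^ Suc (card (UNIV :: 'a set) - 1)"
    by (subst power_Suc) auto
  also have "Suc (card (UNIV :: 'a set) - 1) = card (UNIV :: 'a set)"
    using finite_UNIV_card_ge_0[where ?'a = 'a] by simp
  also have "(\<Prod>y\<in>UNIV-{0}. x * y) = (\<Prod>y\<in>UNIV-{0}. y)"
    by (rule prod.reindex_bij_witness[of _ "\<lambda>y. y / x" "\<lambda>y. x * y"]) (use False in auto)
  finally show ?thesis
    by simp
qed (use finite_UNIV_card_ge_0[where ?'a = 'a] in auto)

lemma card_roots_le:
  fixes p :: "'a::field poly"
  assumes "p \<noteq> 0" "degree p \<le> d" "\<And>x. x \<in> S \<Longrightarrow> poly p x = 0"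
  shows "card S \<le> d"
proof -
  have fin: "finite {x. poly p x = 0}" using assms(1) poly_roots_finite by blast
  have "card S \<le> card {x. poly p x = 0}" using assms(3) by (intro card_mono[OF fin]) auto
  also have "\<dots> \<le> degree p" by (rule card_poly_roots_bound[OF assms(1)])
  finally show ?thesis using assms(2) by simp
qed

locale hs =
  fixes q :: nat and ty :: "'a::{field,finite} itself"
  assumes q2: "2 \<le> q"
  and frob_add: "\<And>x y::'a. (x+y)^q = x^q + y^q"
  and card_F: "card (UNIV::'a set) = q*q"
begin

abbreviation cj :: "'a \<Rightarrow> 'a" where "cj \<equiv> conj_q q"

lemma c_add[simp]: "cj (x + y) = cj x + cj y"
  unfolding conj_q_def by (rule frob_add)
lemma c_mult[simp]: "cj (x * y) = cj x * cj y"
  unfolding conj_q_def by (simp add: power_mult_distrib)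
lemma c_0[simp]: "cj 0 = 0" using q2 unfolding conj_q_def by simp
lemma c_1[simp]: "cj 1 = 1" unfolding conj_q_def by simp
lemma c_c[simp]: "cj (cj x) = x"
  unfolding conj_q_def by (metis card_F pow_card_field power_mult)
lemma c_minus[simp]: "cj (- x) = - cj x"
proof -
  have "cj x + cj (-x) = 0" by (metis c_add c_0 add.right_inverse)
  thus ?thesis by (metis minus_unique)
qed
lemma c_diff[simp]: "cj (x - y) = cj x - cj y"
  by (metis c_add c_minus diff_conv_add_uminus)
lemma c_sum[simp]: "cj (sum f A) = sum (\<lambda>i. cj (f i)) A"
  by (induction A rule: infinite_finite_induct) auto
lemma c_inj: "cj x = cj y \<longleftrightarrow> x = y" by (metis c_c)
lemma c_eq0[simp]: "cj x = 0 \<longleftrightarrow> x = 0" by (metis c_0 c_inj)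
lemma c_inverse[simp]: "cj (inverse x) = inverse (cj x)"
  unfolding conj_q_def by (simp add: power_inverse)
lemma c_divide[simp]: "cj (x / y) = cj x / cj y"
  unfolding conj_q_def by (simp add: power_divide)

lemma Fq_iff: "x \<in> Fq q \<longleftrightarrow> cj x = x" unfolding Fq_def conj_q_def by simp

lemma Fq_card: "card (Fq q :: 'a set) \<le> q"
proof (rule card_roots_le[of "Polynomial.monom 1 q - [:0,1:]"])
  show "Polynomial.monom 1 q - [:0, 1:] \<noteq> (0::'a poly)"
  proof
    assume "Polynomial.monom 1 q - [:0, 1:] = (0::'a poly)"
    hence "Polynomial.coeff (Polynomial.monom 1 q - [:0, 1:]) q = (0::'a)" by simp
    thus False using q2 by (simp add: coeff_pCons split: nat.splits)
  qed
  show "degree (Polynomial.monom 1 q - [:0, 1::'a:]) \<le> q"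
    using q2 by (intro degree_diff_le) (auto simp: degree_monom_le)
  show "\<And>x. x \<in> Fq q \<Longrightarrow> poly (Polynomial.monom 1 q - [:0, 1:]) x = 0"
    by (simp add: Fq_def poly_monom)
qed

lemma tr_surj: "(\<lambda>y. y + cj y) ` UNIV = Fq q"
proof (rule image_eq_by_card[where k = q])
  show "(\<lambda>y. y + cj y) ` UNIV \<subseteq> Fq q" by (auto simp: Fq_iff add.commute)
  define K where "K = {z::'a. z + cj z = 0}"
  have cK: "card K \<le> q"
  proof (rule card_roots_le[of "Polynomial.monom 1 q + [:0,1:]"])
    show "Polynomial.monom 1 q + [:0, 1:] \<noteq> (0::'a poly)"
    proof
      assume "Polynomial.monom 1 q + [:0, 1:] = (0::'a poly)"
      hence "Polynomial.coeff (Polynomial.monom 1 q + [:0, 1:]) q = (0::'a)" by simp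
      thus False using q2 by (simp add: coeff_pCons split: nat.splits)
    qed
    show "degree (Polynomial.monom 1 q + [:0, 1::'a:]) \<le> q"
      using q2 by (intro degree_add_le) (auto simp: degree_monom_le)
    show "\<And>x. x \<in> K \<Longrightarrow> poly (Polynomial.monom 1 q + [:0, 1:]) x = 0"
      by (simp add: K_def poly_monom conj_q_def add.commute)
  qed
  show "card {a \<in> UNIV. a + cj a = b} \<le> q" for b
  proof -
    have "card {a \<in> UNIV. a + cj a = b} \<le> card K"
    proof (rule fiber_le_coset[where g = "\<lambda>y0 z. y0 + z"])
      show "finite K" by simp
      fix y0 a :: 'a assume "y0 + cj y0 = a + cj a"
      hence "(a - y0) + cj (a - y0) = 0" by (simp add: algebra_simps)
      hence "a - y0 \<in> K" by (simp add: K_def)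
      thus "a \<in> (+) y0 ` K" by (intro image_eqI[of _ _ "a - y0"]) auto
    qed
    thus ?thesis using cK by simp
  qed
  show "q * card (Fq q :: 'a set) \<le> card (UNIV :: 'a set)"
    using Fq_card card_F by simp
qed (use q2 in auto)

lemma norm_surj: "(\<lambda>y. cj y * y) ` (UNIV - {0}) = Fq q - {0}"
proof (rule image_eq_by_card[where k = "q+1"])
  show "(\<lambda>y. cj y * y) ` (UNIV - {0}) \<subseteq> Fq q - {0}" by (auto simp: Fq_iff mult.commute)
  define K where "K = {z::'a. z^(q+1) = 1}"
  have cK: "card K \<le> q + 1"
  proof (rule card_roots_le[of "Polynomial.monom 1 (q+1) - 1"])
    show "Polynomial.monom 1 (q+1) - 1 \<noteq> (0::'a poly)"
    proof
      assume "Polynomial.monom 1 (q+1) - 1 = (0::'a poly)"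
      hence "Polynomial.coeff (Polynomial.monom 1 (q+1) - 1) (q+1) = (0::'a)" by simp
      thus False by simp
    qed
    show "degree (Polynomial.monom 1 (q+1) - 1 :: 'a poly) \<le> q + 1"
      by (intro degree_diff_le) (auto simp: degree_monom_le)
    show "\<And>x. x \<in> K \<Longrightarrow> poly (Polynomial.monom 1 (q+1) - 1) x = 0"
      by (simp add: K_def poly_monom)
  qed
  show "card {a \<in> UNIV - {0}. cj a * a = b} \<le> q + 1" for b
  proof -
    have "card {a \<in> UNIV - {0}. cj a * a = b} \<le> card K"
    proof (rule fiber_le_coset[where g = "\<lambda>y0 z. y0 * z"])
      show "finite K" by simp
      fix y0 a :: 'a assume y0: "y0 \<in> UNIV - {0}" and a: "a \<in> UNIV - {0}" and e: "cj y0 * y0 = cj a * a"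
      have "(a / y0) ^ (q+1) = (cj a * a) / (cj y0 * y0)"
        by (simp add: conj_q_def power_divide mult.commute)
      also have "\<dots> = 1" using e y0 a by simp
      finally have "a / y0 \<in> K" by (simp add: K_def)
      thus "a \<in> (*) y0 ` K" using y0 a by (intro image_eqI[of _ _ "a / y0"]) auto
    qed
    thus ?thesis using cK by simp
  qed
  have "0 \<in> (Fq q :: 'a set)" by (simp add: Fq_iff)
  hence "card (Fq q - {0} :: 'a set) = card (Fq q :: 'a set) - 1" by simp
  hence "card (Fq q - {0} :: 'a set) \<le> q - 1" using Fq_card by simp
  hence "(q+1) * card (Fq q - {0} :: 'a set) \<le> (q+1) * (q - 1)" by (rule mult_le_mono2)
  also have "\<dots> = q * q - 1" using q2 by (cases q) simp_all
  also have "\<dots> = card (UNIV - {0::'a})" using card_F by (simp add: card_Diff_singleton)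
  finally show "(q+1) * card (Fq q - {0} :: 'a set) \<le> card (UNIV - {0::'a})" .
qed auto

end

context hs begin

abbreviation ct :: "'a mat \<Rightarrow> 'a mat" where "ct \<equiv> conj_transpose q"

lemma ct_dims[simp]: "dim_row (ct A) = dim_col A" "dim_col (ct A) = dim_row A"
  unfolding conj_transpose_def by auto

lemma ct_carrier[simp]: "ct A \<in> carrier_mat m k \<longleftrightarrow> A \<in> carrier_mat k m"
  unfolding carrier_mat_def by auto

lemma ct_index[simp]: "i < dim_col A \<Longrightarrow> j < dim_row A \<Longrightarrow> ct A $$ (i,j) = cj (A $$ (j,i))"
  unfolding conj_transpose_def by auto

lemma ct_ct[simp]: "ct (ct A) = A"
  by (rule eq_matI) auto

lemma ct_mult: assumes "A \<in> carrier_mat k m" "B \<in> carrier_mat m l"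
  shows "ct (A * B) = ct B * ct A"
  using assms by (intro eq_matI) (auto simp: scalar_prod_def mult.commute)

lemma ct_one[simp]: "ct (1\<^sub>m k) = 1\<^sub>m k"
  by (rule eq_matI) auto

lemma ct_minus: assumes "A \<in> carrier_mat k m" "B \<in> carrier_mat k m"
  shows "ct (A - B) = ct A - ct B"
  using assms by (intro eq_matI) auto

lemma herm_carrier: "A \<in> herm q n \<Longrightarrow> A \<in> carrier_mat n n"
  unfolding herm_def by auto

lemma herm_entry: assumes "A \<in> herm q n" "i < n" "j < n"
  shows "cj (A $$ (i,j)) = A $$ (j,i)"
proof -
  have "A \<in> carrier_mat n n" "ct A = A" using assms(1) unfolding herm_def by auto
  hence "ct A $$ (j,i) = A $$ (j,i)" by simp
  thus ?thesis using assms \<open>A \<in> carrier_mat n n\<close> by simp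
qed

lemma hermI: assumes "A \<in> carrier_mat n n" "\<And>i j. i < n \<Longrightarrow> j < n \<Longrightarrow> cj (A $$ (j,i)) = A $$ (i,j)"
  shows "A \<in> herm q n"
  unfolding herm_def using assms by (auto intro!: eq_matI)

lemma herm_minus: fixes A B :: "'a mat" assumes "A \<in> herm q n" "B \<in> herm q n" shows "A - B \<in> herm q n"
proof (rule hermI)
  show "A - B \<in> carrier_mat n n" by (rule minus_carrier_mat[OF herm_carrier[OF assms(2)]])
  fix i j assume "i < n" "j < n"
  thus "cj ((A - B) $$ (j, i)) = (A - B) $$ (i, j)"
    using assms herm_carrier[OF assms(1)] herm_carrier[OF assms(2)] by (simp add: herm_entry)
qed

lemma herm_cong: assumes "B \<in> herm q n" "P \<in> carrier_mat n n"
  shows "ct P * B * P \<in> herm q n"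
proof -
  have B: "B \<in> carrier_mat n n" "ct B = B" using assms(1) unfolding herm_def by auto
  have "ct (ct P * B * P) = ct P * ct (ct P * B)"
    by (rule ct_mult) (use assms B in auto)
  also have "ct (ct P * B) = ct B * P"
    using ct_mult[of "ct P" n n B n] assms B by simp
  also have "ct P * (ct B * P) = ct P * B * P"
    using B assms by (simp add: assoc_mult_mat[of _ n n _ n _ n])
  finally show ?thesis unfolding herm_def using assms B by auto
qed

lemma trace_mult_comm: assumes "A \<in> carrier_mat k m" "B \<in> carrier_mat m k"
  shows "mat_trace (A * B) = mat_trace (B * A)"
proof -
  have "mat_trace (A * B) = (\<Sum>i<k. \<Sum>l<m. A $$ (i,l) * B $$ (l,i))"
    unfolding mat_trace_def using assms by (auto simp: scalar_prod_def atLeast0LessThan intro!: sum.cong)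
  also have "\<dots> = (\<Sum>l<m. \<Sum>i<k. B $$ (l,i) * A $$ (i,l))"
    by (subst sum.swap) (simp add: mult.commute)
  also have "\<dots> = mat_trace (B * A)"
    unfolding mat_trace_def using assms by (auto simp: scalar_prod_def atLeast0LessThan intro!: sum.cong)
  finally show ?thesis .
qed

lemma trace_herm_Fq: assumes "A \<in> herm q n" "B \<in> herm q n"
  shows "cj (mat_trace (A * B)) = mat_trace (A * B)"
proof -
  have c: "A \<in> carrier_mat n n" "B \<in> carrier_mat n n" using assms herm_carrier by auto
  have "mat_trace (A * B) = (\<Sum>i<n. \<Sum>l<n. A $$ (i,l) * B $$ (l,i))"
    unfolding mat_trace_def using c by (auto simp: scalar_prod_def atLeast0LessThan intro!: sum.cong)
  moreover have "cj (\<Sum>i<n. \<Sum>l<n. A $$ (i,l) * B $$ (l,i)) = (\<Sum>i<n. \<Sum>l<n. A $$ (l,i) * B $$ (i,l))"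
    using assms by (auto simp: herm_entry intro!: sum.cong)
  moreover have "(\<Sum>i<n. \<Sum>l<n. A $$ (l,i) * B $$ (i,l)) = (\<Sum>i<n. \<Sum>l<n. A $$ (i,l) * B $$ (l,i))"
    by (rule sum.swap)
  ultimately show ?thesis by simp
qed

end

definition invm :: "nat \<Rightarrow> 'a::field mat \<Rightarrow> bool" where
  "invm n P \<longleftrightarrow> P \<in> carrier_mat n n \<and> (\<exists>Q\<in>carrier_mat n n. P * Q = 1\<^sub>m n \<and> Q * P = 1\<^sub>m n)"

lemma invm_mult: assumes "invm n P" "invm n R" shows "invm n (P * R)"
proof -
  obtain P' where P: "P \<in> carrier_mat n n" "P' \<in> carrier_mat n n" "P * P' = 1\<^sub>m n" "P' * P = 1\<^sub>m n"
    using assms(1) unfolding invm_def by auto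
  obtain R' where R: "R \<in> carrier_mat n n" "R' \<in> carrier_mat n n" "R * R' = 1\<^sub>m n" "R' * R = 1\<^sub>m n"
    using assms(2) unfolding invm_def by auto
  have "(P * R) * (R' * P') = P * ((R * R') * P')"
    using P(1,2) R(1,2) by (simp add: assoc_mult_mat[of _ n n _ n _ n])
  also have "\<dots> = 1\<^sub>m n" using P R by simp
  finally have 1: "(P * R) * (R' * P') = 1\<^sub>m n" .
  have "(R' * P') * (P * R) = R' * ((P' * P) * R)"
    using P(1,2) R(1,2) by (simp add: assoc_mult_mat[of _ n n _ n _ n])
  also have "\<dots> = 1\<^sub>m n" using P R by simp
  finally have 2: "(R' * P') * (P * R) = 1\<^sub>m n" .
  show ?thesis unfolding invm_def using 1 2 P R by (intro conjI bexI[of _ "R' * P'"]) auto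
qed

context hs begin

lemma invm_ct: assumes "invm n P" shows "invm n (ct P)"
proof -
  obtain P' where P: "P \<in> carrier_mat n n" "P' \<in> carrier_mat n n" "P * P' = 1\<^sub>m n" "P' * P = 1\<^sub>m n"
    using assms(1) unfolding invm_def by auto
  have "ct (P' * P) = ct P * ct P'" by (rule ct_mult) (use P in auto)
  hence 1: "ct P * ct P' = 1\<^sub>m n" using P by simp
  have "ct (P * P') = ct P' * ct P" by (rule ct_mult) (use P in auto)
  hence 2: "ct P' * ct P = 1\<^sub>m n" using P by simp
  show ?thesis unfolding invm_def using 1 2 P by (intro conjI bexI[of _ "ct P'"]) auto
qed

end

lemma rank_mult_right:
  fixes A :: "'a::field mat"
  assumes A: "A \<in> carrier_mat n n" and Q: "invm n Q"
  shows "mat_rank n (A * Q) = mat_rank n A"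
proof -
  obtain Q' where Q': "Q \<in> carrier_mat n n" "Q' \<in> carrier_mat n n" "Q * Q' = 1\<^sub>m n" "Q' * Q = 1\<^sub>m n"
    using Q unfolding invm_def by auto
  have AQ: "A * Q \<in> carrier_mat n n" using A Q' by auto
  have "vec_space.col_space n (A * Q) = vec_space.col_space n A"
  proof -
    have "vec_space.col_space n (A * Q) = {y \<in> carrier_vec n. \<exists>x\<in>carrier_vec n. (A * Q) *\<^sub>v x = y}"
      using vec_space.col_space_eq[OF AQ] AQ A Q' by simp
    also have "\<dots> = {y \<in> carrier_vec n. \<exists>x\<in>carrier_vec n. A *\<^sub>v x = y}"
    proof (intro Collect_cong conj_cong refl iffI)
      fix y assume "\<exists>x\<in>carrier_vec n. (A * Q) *\<^sub>v x = y"
      then obtain x where x: "x \<in> carrier_vec n" "(A * Q) *\<^sub>v x = y" by blast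
      hence "A *\<^sub>v (Q *\<^sub>v x) = y" using A Q' by (simp add: assoc_mult_mat_vec)
      thus "\<exists>x\<in>carrier_vec n. A *\<^sub>v x = y" using x Q' by (intro bexI[of _ "Q *\<^sub>v x"]) auto
    next
      fix y assume "\<exists>x\<in>carrier_vec n. A *\<^sub>v x = y"
      then obtain x where x: "x \<in> carrier_vec n" "A *\<^sub>v x = y" by blast
      have "Q *\<^sub>v (Q' *\<^sub>v x) = (Q * Q') *\<^sub>v x"
        by (rule assoc_mult_mat_vec[symmetric]) (use Q' x in auto)
      also have "\<dots> = x" using Q'(3) x by simp
      finally have qq: "Q *\<^sub>v (Q' *\<^sub>v x) = x" .
      have "(A * Q) *\<^sub>v (Q' *\<^sub>v x) = A *\<^sub>v (Q *\<^sub>v (Q' *\<^sub>v x))"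
        using A Q' x by simp
      also have "\<dots> = y" using qq x by simp
      finally show "\<exists>x\<in>carrier_vec n. (A * Q) *\<^sub>v x = y" using x Q' by (intro bexI[of _ "Q' *\<^sub>v x"]) auto
    qed
    also have "\<dots> = vec_space.col_space n A"
      using vec_space.col_space_eq[OF A] A by simp
    finally show ?thesis .
  qed
  thus ?thesis unfolding mat_rank_def vec_space.rank_def vec_space.col_space_def by simp
qed



lemma inv_cancel_vec:
  assumes "P \<in> carrier_mat n n" "P' \<in> carrier_mat n n" "P' * P = 1\<^sub>m n" "x \<in> carrier_vec n"
  shows "P' *\<^sub>v (P *\<^sub>v x) = (x :: 'a::comm_ring_1 vec)"
proof -
  have "P' *\<^sub>v (P *\<^sub>v x) = (P' * P) *\<^sub>v x"
    by (rule assoc_mult_mat_vec[symmetric, of P' n n P n x]) (use assms in auto)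
  also have "\<dots> = x" unfolding assms(3) using assms(4) by simp
  finally show ?thesis .
qed

lemma rank_mult_left:
  fixes A P :: "'a::field mat"
  assumes A: "A \<in> carrier_mat n n" and P: "invm n P"
  shows "mat_rank n (P * A) = mat_rank n A"
proof -
  obtain P' where P': "P \<in> carrier_mat n n" "P' \<in> carrier_mat n n" "P * P' = 1\<^sub>m n" "P' * P = 1\<^sub>m n"
    using P unfolding invm_def by auto
  interpret vs: vec_space "TYPE('a)" n .
  have PA: "P * A \<in> carrier_mat n n" using A P' by auto
  have cA: "set (cols A) \<subseteq> carrier_vec n" using A cols_dim[of A] by auto
  have cPA: "set (cols (P * A)) \<subseteq> carrier_vec n" using PA P' cols_dim[of "P * A"] by auto
  have eA: "vs.span (set (cols A)) = {y \<in> carrier_vec n. \<exists>x\<in>carrier_vec n. A *\<^sub>v x = y}"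
    using vs.col_space_eq[OF A] A unfolding vs.col_space_def by simp
  have ePA: "vs.span (set (cols (P * A))) = {y \<in> carrier_vec n. \<exists>x\<in>carrier_vec n. (P * A) *\<^sub>v x = y}"
    using vs.col_space_eq[OF PA] PA A P' unfolding vs.col_space_def by simp
  have img: "(\<lambda>v. P *\<^sub>v v) ` vs.span (set (cols A)) = vs.span (set (cols (P * A)))"
    unfolding eA ePA using A P' by (auto simp: assoc_mult_mat_vec)
  have vsA: "vectorspace class_ring (vs.vs (vs.span (set (cols A))))" by (rule vs.subspace_is_vs[OF vs.span_is_subspace[OF cA]])
  have vsPA: "vectorspace class_ring (vs.vs (vs.span (set (cols (P * A)))))" by (rule vs.subspace_is_vs[OF vs.span_is_subspace[OF cPA]])
  have lm: "linear_map class_ring (vs.vs (vs.span (set (cols A)))) (vs.vs (vs.span (set (cols (P * A))))) (\<lambda>v. P *\<^sub>v v)"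
    unfolding linear_map_def mod_hom_def mod_hom_axioms_def
  proof (intro conjI)
    show "vectorspace class_ring (vs.vs (vs.span (set (cols A))))" by (rule vsA)
    show "vectorspace class_ring (vs.vs (vs.span (set (cols (P * A)))))" by (rule vsPA)
    show "Module.module class_ring (vs.vs (vs.span (set (cols A))))" using vsA vectorspace_def by blast
    show "Module.module class_ring (vs.vs (vs.span (set (cols (P * A)))))" using vsPA vectorspace_def by blast
    show "(\<lambda>v. P *\<^sub>v v) \<in> LinearCombinations.module_hom class_ring (vs.vs (vs.span (set (cols A)))) (vs.vs (vs.span (set (cols (P * A)))))"
      unfolding LinearCombinations.module_hom_def
      using img P' eA by (auto simp: mult_add_distrib_mat_vec mult_mat_vec)
  qed
  have fin: "vectorspace.fin_dim class_ring (vs.vs (vs.span (set (cols A))))"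
    by (rule vs.fin_dim_span_cols[OF A])
  have inj: "inj_on (\<lambda>v. P *\<^sub>v v) (carrier (vs.vs (vs.span (set (cols A)))))"
  proof (rule inj_onI)
    fix x y assume x: "x \<in> carrier (vs.vs (vs.span (set (cols A))))" and y: "y \<in> carrier (vs.vs (vs.span (set (cols A))))"
      and e: "P *\<^sub>v x = P *\<^sub>v y"
    have xc: "x \<in> carrier_vec n" "y \<in> carrier_vec n" using x y eA by auto
    have "x = P' *\<^sub>v (P *\<^sub>v x)" using inv_cancel_vec[OF P'(1,2,4) xc(1)] by simp
    also have "\<dots> = P' *\<^sub>v (P *\<^sub>v y)" using e by simp
    also have "\<dots> = y" using inv_cancel_vec[OF P'(1,2,4) xc(2)] by simp
    finally show "x = y" .
  qed
  have surj: "(\<lambda>v. P *\<^sub>v v) ` carrier (vs.vs (vs.span (set (cols A)))) = carrier (vs.vs (vs.span (set (cols (P * A)))))"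
    using img by simp
  have "vectorspace.dim class_ring (vs.vs (vs.span (set (cols A)))) = vectorspace.dim class_ring (vs.vs (vs.span (set (cols (P * A)))))"
    by (rule linear_map.dim_eq[OF lm fin inj surj])
  thus ?thesis unfolding mat_rank_def vs.rank_def by simp
qed


definition Dm :: "nat \<Rightarrow> nat \<Rightarrow> 'a::field mat" where
  "Dm n m = mat n n (\<lambda>(i,j). if i = j \<and> i < m then 1 else 0)"

lemma Dm_carrier[simp]: "Dm n m \<in> carrier_mat n n" unfolding Dm_def by auto
lemma Dm_dims[simp]: "dim_row (Dm n m) = n" "dim_col (Dm n m) = n" unfolding Dm_def by auto
lemma Dm_index[simp]: "i < n \<Longrightarrow> j < n \<Longrightarrow> Dm n m $$ (i,j) = (if i = j \<and> i < m then 1 else 0)"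
  unfolding Dm_def by auto

lemma rank_Dm:
  assumes "m \<le> n"
  shows "mat_rank n (Dm n m :: 'a::field mat) = m"
proof -
  interpret vs: vec_space "TYPE('a)" n .
  define S where "S = (unit_vec n ` {..<m} :: 'a vec set)"
  have colD: "col (Dm n m) j = (if j < m then unit_vec n j else 0\<^sub>v n)" if "j < n" for j
    using that unfolding Dm_def by (intro eq_vecI) auto
  have setc: "set (cols (Dm n m :: 'a mat)) = (\<lambda>j. col (Dm n m) j) ` {..<n}"
    unfolding cols_def by (auto simp: Dm_def)
  have S_sub: "S \<subseteq> set (cols (Dm n m :: 'a mat))"
  proof
    fix x assume "x \<in> S"
    then obtain j where j: "j < m" "x = unit_vec n j" unfolding S_def by auto
    have "col (Dm n m) j = x" using colD[of j] assms j by simp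
    hence "x = col (Dm n m) j" by simp
    thus "x \<in> set (cols (Dm n m :: 'a mat))" unfolding setc using j assms by auto
  qed
  have cols_sub: "set (cols (Dm n m :: 'a mat)) \<subseteq> insert (0\<^sub>v n) S"
  proof
    fix x assume "x \<in> set (cols (Dm n m :: 'a mat))"
    then obtain j where j: "j < n" "x = col (Dm n m) j" unfolding setc by auto
    thus "x \<in> insert (0\<^sub>v n) S" using colD[of j] unfolding S_def by (auto split: if_splits)
  qed
  have li_unit: "vs.lin_indpt (set (unit_vecs n) :: 'a vec set)"
    using vs.unit_vecs_basis unfolding vs.basis_def by auto
  have "S \<subseteq> set (unit_vecs n)" unfolding S_def unit_vecs_def using assms by auto
  hence liS: "vs.lin_indpt S" using vs.subset_li_is_li[OF li_unit] by blast
  have max: "maximal S (\<lambda>T. T \<subseteq> set (cols (Dm n m :: 'a mat)) \<and> vs.lin_indpt T)"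
    unfolding maximal_def
  proof (intro conjI allI impI)
    show "S \<subseteq> set (cols (Dm n m)) " by (rule S_sub)
    show "vs.lin_indpt S" by (rule liS)
    fix T assume T: "S \<subseteq> T \<and> T \<subseteq> set (cols (Dm n m :: 'a mat)) \<and> vs.lin_indpt T"
    have Tc: "T \<subseteq> carrier_vec n" using T cols_dim[of "Dm n m :: 'a mat"] Dm_carrier[of n m] by auto
    have "0\<^sub>v n \<notin> T" using vs.vs_zero_lin_dep[OF Tc] T by simp
    thus "T = S" using T cols_sub by auto
  qed
  have "mat_rank n (Dm n m :: 'a mat) = card S"
    unfolding mat_rank_def by (rule vs.rank_card_indpt[OF Dm_carrier max])
  also have "card S = m"
  proof -
    have "inj_on (unit_vec n :: nat \<Rightarrow> 'a vec) {..<m}"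
    proof (rule inj_onI)
      fix i j assume "i \<in> {..<m}" "j \<in> {..<m}" "(unit_vec n i :: 'a vec) = unit_vec n j"
      hence "(unit_vec n i :: 'a vec) $ i = unit_vec n j $ i" "i < n" "j < n" using assms by auto
      thus "i = j" by (auto split: if_splits)
    qed
    thus ?thesis unfolding S_def by (simp add: card_image)
  qed
  finally show ?thesis .
qed


definition Ssum :: "nat \<Rightarrow> nat \<Rightarrow> ('a::field \<Rightarrow> complex) \<Rightarrow> 'a mat \<Rightarrow> complex" where
  "Ssum q n \<chi> B = (\<Sum>A\<in>herm_rank q n 1. pairing q \<chi> A B)"

context hs begin

lemma rank_cong: assumes "B \<in> carrier_mat n n" "invm n P"
  shows "mat_rank n (ct P * B * P) = mat_rank n B"
proof -
  have P: "P \<in> carrier_mat n n" using assms(2) unfolding invm_def by auto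
  have "mat_rank n (ct P * B * P) = mat_rank n (ct P * B)"
    by (rule rank_mult_right) (use assms P in auto)
  also have "\<dots> = mat_rank n B"
    by (rule rank_mult_left[OF assms(1) invm_ct[OF assms(2)]])
  finally show ?thesis .
qed

lemma herm_rank_cong: assumes "A \<in> herm_rank q n k" "invm n P"
  shows "ct P * A * P \<in> herm_rank q n k"
  using assms herm_cong[of A n P] rank_cong[of A n P] unfolding herm_rank_def invm_def
  by (auto simp: herm_carrier)

lemma pairing_herm: "A \<in> herm q n \<Longrightarrow> pairing q \<chi> A B = \<chi> (mat_trace (A * B))"
  unfolding pairing_def herm_def by auto

lemma Ssum_cong: assumes B: "B \<in> herm q n" and P: "invm n P"
  shows "Ssum q n \<chi> (ct P * B * P) = Ssum q n \<chi> B"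
proof -
  obtain P' where P': "P \<in> carrier_mat n n" "P' \<in> carrier_mat n n" "P * P' = 1\<^sub>m n" "P' * P = 1\<^sub>m n"
    using P unfolding invm_def by auto
  have P'inv: "invm n P'" unfolding invm_def using P' by auto
  have Bc: "B \<in> carrier_mat n n" using B herm_carrier by auto
  define phi where "phi = (\<lambda>A. ct (ct P) * A * ct P)"
  define psi where "psi = (\<lambda>A. ct (ct P') * A * ct P')"
  have ctPP: "ct P * ct P' = 1\<^sub>m n"
  proof -
    have "ct (P' * P) = ct P * ct P'" by (rule ct_mult) (use P' in auto)
    thus ?thesis using P' by simp
  qed
  have ctPP2: "ct P' * ct P = 1\<^sub>m n"
  proof -
    have "ct (P * P') = ct P' * ct P" by (rule ct_mult) (use P' in auto)
    thus ?thesis using P' by simp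
  qed
  have asc: "\<And>X Y Z :: 'a mat. X \<in> carrier_mat n n \<Longrightarrow> Y \<in> carrier_mat n n \<Longrightarrow> Z \<in> carrier_mat n n \<Longrightarrow> X * Y * Z = X * (Y * Z)"
    by (rule assoc_mult_mat) auto
  show ?thesis unfolding Ssum_def
  proof (rule sum.reindex_bij_witness[where j = phi and i = psi])
    fix A :: "'a mat" assume A: "A \<in> herm_rank q n 1"
    have Ac: "A \<in> carrier_mat n n" using A unfolding herm_rank_def by (auto simp: herm_carrier)
    show "phi A \<in> herm_rank q n 1" unfolding phi_def by (rule herm_rank_cong[OF A invm_ct[OF P]])
    have "psi (phi A) = P' * P * A * (ct P * ct P')"
      unfolding phi_def psi_def using P'(1,2) Ac by (simp add: asc)
    thus "psi (phi A) = A" unfolding ctPP P'(4) using Ac by simp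
    have Ah: "A \<in> herm q n" using A unfolding herm_rank_def by auto
    have phih: "phi A \<in> herm q n" using \<open>phi A \<in> herm_rank q n 1\<close> unfolding herm_rank_def by auto
    have "pairing q \<chi> (phi A) B = \<chi> (mat_trace (phi A * B))"
      by (rule pairing_herm[OF phih])
    also have "phi A * B = P * (A * (ct P * B))"
      unfolding phi_def using P'(1,2) Ac Bc by (simp add: asc)
    also have "mat_trace (P * (A * (ct P * B))) = mat_trace ((A * (ct P * B)) * P)"
      by (rule trace_mult_comm) (use P' Ac Bc in auto)
    also have "\<chi> (mat_trace ((A * (ct P * B)) * P)) = pairing q \<chi> A (ct P * B * P)"
      unfolding pairing_herm[OF Ah] using P' Ac Bc by (simp add: asc)
    finally show "pairing q \<chi> (phi A) B = pairing q \<chi> A (ct P * B * P)" .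
  next
    fix A :: "'a mat" assume A: "A \<in> herm_rank q n 1"
    have Ac: "A \<in> carrier_mat n n" using A unfolding herm_rank_def by (auto simp: herm_carrier)
    show "psi A \<in> herm_rank q n 1" unfolding psi_def by (rule herm_rank_cong[OF A invm_ct[OF P'inv]])
    have "phi (psi A) = P * P' * A * (ct P' * ct P)"
      unfolding phi_def psi_def using P'(1,2) Ac by (simp add: asc)
    thus "phi (psi A) = A" unfolding ctPP2 P'(3) using Ac by simp
  qed
qed

end


lemma invm_one: "invm n (1\<^sub>m n)" unfolding invm_def by (auto intro!: bexI[of _ "1\<^sub>m n"])

lemma invm_swap: assumes "i < n" "k < n" shows "invm n (swaprows_mat n i k :: 'a::field mat)"
  unfolding invm_def using swaprows_mat_inv[OF assms] by (auto intro!: bexI[of _ "swaprows_mat n i k"])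

lemma invm_add: assumes "k < n" "l < n" "k \<noteq> l" shows "invm n (addrow_mat n (a::'a::field) k l)"
proof -
  have 1: "addrow_mat n a k l * addrow_mat n (- a) k l = 1\<^sub>m n" by (rule addrow_mat_inv[OF assms])
  have 2: "addrow_mat n (- a) k l * addrow_mat n (- (- a)) k l = 1\<^sub>m n" by (rule addrow_mat_inv[OF assms])
  show ?thesis unfolding invm_def using 1 2 by (auto intro!: bexI[of _ "addrow_mat n (- a) k l"])
qed

lemma invm_multrow: assumes "k < n" "(a::'a::field) \<noteq> 0" shows "invm n (multrow_mat n k a)"
proof -
  have 1: "multrow_mat n k a * multrow_mat n k (inverse a) = 1\<^sub>m n" by (rule multrow_mat_inv[OF assms])
  have 2: "multrow_mat n k (inverse a) * multrow_mat n k (inverse (inverse a)) = 1\<^sub>m n"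
    by (rule multrow_mat_inv) (use assms in auto)
  show ?thesis unfolding invm_def using 1 2 by (auto intro!: bexI[of _ "multrow_mat n k (inverse a)"])
qed

context hs begin

lemma c_if: "cj (if P then x else y) = (if P then cj x else cj y)" by simp

lemma ct_swap: "ct (swaprows_mat n i k) = swaprows_mat n i k"
  by (rule eq_matI) (auto simp: c_if)

lemma ct_addrow: "ct (addrow_mat n a k l) = addrow_mat n (cj a) l k"
  by (rule eq_matI) (auto simp: c_if)

lemma ct_multrow: "ct (multrow_mat n k a) = multrow_mat n k (cj a)"
  by (rule eq_matI) (auto simp: c_if)

lemma cong_swap: assumes "B \<in> carrier_mat n n" "i < n" "k < n"
  shows "ct (swaprows_mat n i k) * B * swaprows_mat n i k = swapcols i k (swaprows i k B)"
proof -
  have "ct (swaprows_mat n i k) * B = swaprows i k B"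
    unfolding ct_swap by (rule swaprows_mat[symmetric, OF assms])
  moreover have "swaprows i k B * swaprows_mat n i k = swapcols i k (swaprows i k B)"
    by (rule swapcols_mat[symmetric]) (use assms in auto)
  ultimately show ?thesis by simp
qed

lemma cong_add: assumes "B \<in> carrier_mat n n" "k < n" "l < n"
  shows "ct (addrow_mat n a k l) * B * addrow_mat n a k l = addcol a l k (addrow (cj a) l k B)"
proof -
  have "ct (addrow_mat n a k l) * B = addrow (cj a) l k B"
    unfolding ct_addrow by (rule addrow_mat[symmetric]) (use assms in auto)
  moreover have "addrow (cj a) l k B * addrow_mat n a k l = addcol a l k (addrow (cj a) l k B)"
    by (rule addcol_mat[symmetric]) (use assms in auto)
  ultimately show ?thesis by simp
qed

lemma cong_multrow: assumes "B \<in> carrier_mat n n"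
  shows "ct (multrow_mat n k a) * B * multrow_mat n k a = multcol k a (multrow k (cj a) B)"
proof -
  have "ct (multrow_mat n k a) * B = multrow k (cj a) B"
    unfolding ct_multrow by (rule multrow_mat[symmetric]) (use assms in auto)
  moreover have "multrow k (cj a) B * multrow_mat n k a = multcol k a (multrow k (cj a) B)"
    by (rule multcol_mat[symmetric]) (use assms in auto)
  ultimately show ?thesis by simp
qed

lemma cong_comp: assumes "P \<in> carrier_mat n n" "R \<in> carrier_mat n n" "B \<in> carrier_mat n n"
  shows "ct (P * R) * B * (P * R) = ct R * (ct P * B * P) * R"
proof -
  have "ct (P * R) = ct R * ct P" by (rule ct_mult) (use assms in auto)
  thus ?thesis using assms by (simp add: assoc_mult_mat[of _ n n _ n _ n])
qed

end


definition good :: "nat \<Rightarrow> nat \<Rightarrow> 'a::field mat \<Rightarrow> bool" where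
  "good n k B \<longleftrightarrow> (\<forall>i<n. \<forall>j<n. (i < k \<or> j < k) \<longrightarrow> B $$ (i,j) = (if i = j then 1 else 0))"

context hs begin

definition cong_to :: "nat \<Rightarrow> 'a mat \<Rightarrow> 'a mat \<Rightarrow> bool" where
  "cong_to n B B' \<longleftrightarrow> (\<exists>P. invm n P \<and> B' = ct P * B * P)"

lemma cong_to_refl: "B \<in> carrier_mat n n \<Longrightarrow> cong_to n B B"
  unfolding cong_to_def by (intro exI[of _ "1\<^sub>m n"]) (auto simp: invm_one)

lemma cong_to_trans: assumes "B \<in> carrier_mat n n" "cong_to n B B1" "cong_to n B1 B2"
  shows "cong_to n B B2"
proof -
  obtain P where P: "invm n P" "B1 = ct P * B * P" using assms(2) unfolding cong_to_def by auto
  obtain R where R: "invm n R" "B2 = ct R * B1 * R" using assms(3) unfolding cong_to_def by auto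
  have "ct (P * R) * B * (P * R) = B2"
    using cong_comp[of P n R B] P R assms(1) unfolding invm_def by auto
  thus ?thesis unfolding cong_to_def using invm_mult[OF P(1) R(1)] by metis
qed

lemma cong_to_herm: "B \<in> herm q n \<Longrightarrow> cong_to n B B' \<Longrightarrow> B' \<in> herm q n"
  unfolding cong_to_def invm_def using herm_cong by blast

lemma step_swap:
  assumes B: "B \<in> herm q n" and g: "good n k B" and i: "k \<le> i" "i < n" and nz: "B $$ (i,i) \<noteq> 0"
  shows "\<exists>B'. cong_to n B B' \<and> good n k B' \<and> B' $$ (k,k) \<noteq> 0"
proof -
  have Bc: "B \<in> carrier_mat n n" using B herm_carrier by auto
  have kn: "k < n" using i by simp
  define B1 where "B1 = swapcols i k (swaprows i k B)"
  have c: "cong_to n B B1" unfolding cong_to_def B1_def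
    using cong_swap[OF Bc i(2) kn] invm_swap[OF i(2) kn] by metis
  have e: "B1 $$ (a,b) = B $$ (if a = i then k else if a = k then i else a, if b = i then k else if b = k then i else b)"
    if "a < n" "b < n" for a b
    unfolding B1_def using that Bc i kn by auto
  have "B1 $$ (k,k) = B $$ (i,i)" using e[OF kn kn] by auto
  moreover have "good n k B1" unfolding good_def
  proof (intro allI impI)
    fix a b assume ab: "a < n" "b < n" "a < k \<or> b < k"
    define sa where "sa = (if a = i then k else if a = k then i else a)"
    define sb where "sb = (if b = i then k else if b = k then i else b)"
    have s: "sa < n" "sb < n" "sa < k \<or> sb < k" "sa = sb \<longleftrightarrow> a = b"
      unfolding sa_def sb_def using ab i by auto
    have "B $$ (sa, sb) = (if sa = sb then 1 else 0)"
      using g s unfolding good_def by blast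
    thus "B1 $$ (a, b) = (if a = b then 1 else 0)"
      unfolding e[OF ab(1,2)] sa_def[symmetric] sb_def[symmetric] s(4) .
  qed
  ultimately show ?thesis using c nz by auto
qed

lemma step_make_diag:
  assumes B: "B \<in> herm q n" and g: "good n k B" and ij: "k \<le> i" "i < n" "k \<le> j" "j < n"
    and nz: "B $$ (i,j) \<noteq> 0" and dz: "\<forall>l. k \<le> l \<and> l < n \<longrightarrow> B $$ (l,l) = 0"
  shows "\<exists>B'. cong_to n B B' \<and> good n k B' \<and> B' $$ (i,i) \<noteq> 0"
proof -
  have Bc: "B \<in> carrier_mat n n" using B herm_carrier by auto
  have ineq: "i \<noteq> j" using nz dz ij by auto
  have "(1::'a) \<in> Fq q" by (simp add: Fq_iff)
  then obtain y where y: "y + cj y = 1" using tr_surj by (metis (no_types, lifting) imageE)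
  define mu where "mu = y / B $$ (i,j)"
  define B1 where "B1 = addcol mu i j (addrow (cj mu) i j B)"
  have c: "cong_to n B B1" unfolding cong_to_def B1_def
    using cong_add[OF Bc ij(4) ij(2), of mu] invm_add[OF ij(4) ij(2) ineq[symmetric], of mu] by metis
  have e: "B1 $$ (a,b) = (if b = i then mu * (if a = i then cj mu * B $$ (j,j) + B $$ (i,j) else B $$ (a,j))
       + (if a = i then cj mu * B $$ (j,i) + B $$ (i,i) else B $$ (a,i))
     else (if a = i then cj mu * B $$ (j,b) + B $$ (i,b) else B $$ (a,b)))"
    if "a < n" "b < n" for a b
    unfolding B1_def using that Bc ij by auto
  have m: "mu * B $$ (i,j) = y" unfolding mu_def using nz by simp
  have "B1 $$ (i,i) = mu * B $$ (i,j) + cj mu * B $$ (j,i)"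
    using e[OF ij(2) ij(2)] dz ij by auto
  also have "B $$ (j,i) = cj (B $$ (i,j))" using herm_entry[OF B ij(2) ij(4)] by simp
  also have "cj mu * cj (B $$ (i,j)) = cj (mu * B $$ (i,j))" by simp
  finally have "B1 $$ (i,i) = y + cj y" unfolding m .
  hence "B1 $$ (i,i) \<noteq> 0" using y by simp
  moreover have "good n k B1" unfolding good_def
  proof (intro allI impI)
    fix a b assume ab: "a < n" "b < n" "a < k \<or> b < k"
    have gg: "\<And>x z. x < n \<Longrightarrow> z < n \<Longrightarrow> x < k \<or> z < k \<Longrightarrow> B $$ (x,z) = (if x = z then 1 else 0)"
      using g unfolding good_def by blast
    show "B1 $$ (a, b) = (if a = b then 1 else 0)"
    proof (cases "b = i")
      case True
      hence "a < k" "a \<noteq> i" "a \<noteq> j" "a \<noteq> b" using ab ij by auto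
      thus ?thesis unfolding e[OF ab(1,2)] using True gg[of a j] gg[of a i] ab ij by simp
    next
      case False
      show ?thesis
      proof (cases "a = i")
        case True
        hence "b < k" "b \<noteq> i" "b \<noteq> j" "a \<noteq> b" using ab ij by auto
        thus ?thesis unfolding e[OF ab(1,2)] using True False gg[of j b] gg[of i b] ab ij by simp
      next
        case False2: False
        thus ?thesis unfolding e[OF ab(1,2)] using False gg[of a b] ab by simp
      qed
    qed
  qed
  ultimately show ?thesis using c by auto
qed

lemma step_diag_nonzero:
  assumes B: "B \<in> herm q n" and g: "good n k B" and ij: "k \<le> i" "i < n" "k \<le> j" "j < n"
    and nz: "B $$ (i,j) \<noteq> 0"
  shows "\<exists>B'. cong_to n B B' \<and> good n k B' \<and> B' $$ (k,k) \<noteq> 0"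
proof (cases "\<exists>l. k \<le> l \<and> l < n \<and> B $$ (l,l) \<noteq> 0")
  case True
  then obtain l where "k \<le> l" "l < n" "B $$ (l,l) \<noteq> 0" by auto
  thus ?thesis using step_swap[OF B g] by blast
next
  case False
  hence "\<forall>l. k \<le> l \<and> l < n \<longrightarrow> B $$ (l,l) = 0" by auto
  from step_make_diag[OF B g ij nz this] obtain B1 where
    B1: "cong_to n B B1" "good n k B1" "B1 $$ (i,i) \<noteq> 0" by auto
  have B1h: "B1 \<in> herm q n" using cong_to_herm[OF B B1(1)] .
  from step_swap[OF B1h B1(2) ij(1,2) B1(3)] obtain B2 where
    B2: "cong_to n B1 B2" "good n k B2" "B2 $$ (k,k) \<noteq> 0" by auto
  have "cong_to n B B2" using cong_to_trans[OF _ B1(1) B2(1)] B herm_carrier by auto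
  thus ?thesis using B2 by auto
qed

end


context hs begin

lemma step_elim:
  assumes B: "B \<in> herm q n" and g: "good n k B" and kn: "k < n" and nz: "B $$ (k,k) \<noteq> 0"
  shows "\<exists>B'. cong_to n B B' \<and> good n k B' \<and> B' $$ (k,k) = B $$ (k,k) \<and> (\<forall>j. k < j \<and> j < n \<longrightarrow> B' $$ (k,j) = 0)"
proof -
  have Bc: "B \<in> carrier_mat n n" using B herm_carrier by auto
  have "\<forall>t. t \<le> n \<longrightarrow> (\<exists>B'. cong_to n B B' \<and> good n k B' \<and> B' $$ (k,k) = B $$ (k,k) \<and> (\<forall>j. k < j \<and> j < t \<longrightarrow> B' $$ (k,j) = 0))"
  proof (intro allI)
    fix t show "t \<le> n \<longrightarrow> (\<exists>B'. cong_to n B B' \<and> good n k B' \<and> B' $$ (k,k) = B $$ (k,k) \<and> (\<forall>j. k < j \<and> j < t \<longrightarrow> B' $$ (k,j) = 0))"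
    proof (induction t)
      case 0
      show ?case using cong_to_refl[OF Bc] g by auto
    next
      case (Suc t)
      show ?case
      proof
        assume tn: "Suc t \<le> n"
        then obtain B1 where B1: "cong_to n B B1" "good n k B1" "B1 $$ (k,k) = B $$ (k,k)"
          "\<forall>j. k < j \<and> j < t \<longrightarrow> B1 $$ (k,j) = 0" using Suc by auto
        have B1h: "B1 \<in> herm q n" using cong_to_herm[OF B B1(1)] .
        have B1c: "B1 \<in> carrier_mat n n" using B1h herm_carrier by auto
        show "\<exists>B'. cong_to n B B' \<and> good n k B' \<and> B' $$ (k,k) = B $$ (k,k) \<and> (\<forall>j. k < j \<and> j < Suc t \<longrightarrow> B' $$ (k,j) = 0)"
        proof (cases "t \<le> k")
          case True
          thus ?thesis using B1 by (intro exI[of _ B1]) auto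
        next
          case False
          hence kt: "k < t" "t < n" using tn by auto
          define mu where "mu = - B1 $$ (k,t) / B1 $$ (k,k)"
          define B2 where "B2 = addcol mu t k (addrow (cj mu) t k B1)"
          have c: "cong_to n B1 B2" unfolding cong_to_def B2_def
            using cong_add[OF B1c kn kt(2), of mu] invm_add[OF kn kt(2), of mu] kt by (metis less_irrefl)
          have e: "B2 $$ (a,b) = (if b = t then mu * (if a = t then cj mu * B1 $$ (k,k) + B1 $$ (t,k) else B1 $$ (a,k))
               + (if a = t then cj mu * B1 $$ (k,t) + B1 $$ (t,t) else B1 $$ (a,t))
             else (if a = t then cj mu * B1 $$ (k,b) + B1 $$ (t,b) else B1 $$ (a,b)))"
            if "a < n" "b < n" for a b
            unfolding B2_def using that B1c kt kn by auto
          have gg: "\<And>x z. x < n \<Longrightarrow> z < n \<Longrightarrow> x < k \<or> z < k \<Longrightarrow> B1 $$ (x,z) = (if x = z then 1 else 0)"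
            using B1(2) unfolding good_def by blast
          have d0: "B1 $$ (k,k) \<noteq> 0" using B1(3) nz by simp
          have "good n k B2" unfolding good_def
          proof (intro allI impI)
            fix a b assume ab: "a < n" "b < n" "a < k \<or> b < k"
            show "B2 $$ (a, b) = (if a = b then 1 else 0)"
            proof (cases "b = t")
              case True
              hence "a < k" "a \<noteq> t" "a \<noteq> k" "a \<noteq> b" using ab kt by auto
              thus ?thesis unfolding e[OF ab(1,2)] using True gg[of a k] gg[of a t] ab kt kn by simp
            next
              case False
              show ?thesis
              proof (cases "a = t")
                case True
                hence "b < k" "b \<noteq> t" "b \<noteq> k" "a \<noteq> b" using ab kt by auto
                thus ?thesis unfolding e[OF ab(1,2)] using True False gg[of k b] gg[of t b] ab kt kn by simp
              next
                case False2: False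
                thus ?thesis unfolding e[OF ab(1,2)] using False gg[of a b] ab by simp
              qed
            qed
          qed
          moreover have "B2 $$ (k,k) = B $$ (k,k)" using e[OF kn kn] kt B1(3) by auto
          moreover have "\<forall>j. k < j \<and> j < Suc t \<longrightarrow> B2 $$ (k,j) = 0"
          proof (intro allI impI)
            fix j assume j: "k < j \<and> j < Suc t"
            show "B2 $$ (k,j) = 0"
            proof (cases "j = t")
              case True
              have "B2 $$ (k,j) = mu * B1 $$ (k,k) + B1 $$ (k,t)"
                using e[OF kn, of j] True kt by auto
              also have "\<dots> = 0" unfolding mu_def using d0 by simp
              finally show ?thesis .
            next
              case False
              hence "j < t" using j by auto
              thus ?thesis using e[OF kn, of j] False kt B1(4) j by auto
            qed
          qed
          ultimately show ?thesis using cong_to_trans[OF Bc B1(1) c] by blast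
        qed
      qed
    qed
  qed
  thus ?thesis by blast
qed

lemma step_scale:
  assumes B: "B \<in> herm q n" and g: "good n k B" and kn: "k < n" and nz: "B $$ (k,k) \<noteq> 0"
    and z: "\<forall>j. k < j \<and> j < n \<longrightarrow> B $$ (k,j) = 0"
  shows "\<exists>B'. cong_to n B B' \<and> good n (Suc k) B'"
proof -
  have Bc: "B \<in> carrier_mat n n" using B herm_carrier by auto
  define d where "d = B $$ (k,k)"
  have cd: "cj d = d" unfolding d_def using herm_entry[OF B kn kn] .
  have "inverse d \<in> Fq q - {0}" using cd nz by (simp add: Fq_iff d_def)
  then obtain lam where lam: "lam \<noteq> 0" "cj lam * lam = inverse d" using norm_surj
    by (metis (no_types, lifting) DiffE imageE insertI1)
  define B1 where "B1 = multcol k lam (multrow k (cj lam) B)"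
  have c: "cong_to n B B1" unfolding cong_to_def B1_def
    using cong_multrow[OF Bc, of k lam] invm_multrow[OF kn lam(1)] by metis
  have e: "B1 $$ (a,b) = (if k = b then lam * (if k = a then cj lam * B $$ (a,b) else B $$ (a,b))
      else (if k = a then cj lam * B $$ (a,b) else B $$ (a,b)))"
    if "a < n" "b < n" for a b
    unfolding B1_def using that Bc by auto
  have gg: "\<And>x y. x < n \<Longrightarrow> y < n \<Longrightarrow> x < k \<or> y < k \<Longrightarrow> B $$ (x,y) = (if x = y then 1 else 0)"
    using g unfolding good_def by blast
  have "good n (Suc k) B1" unfolding good_def
  proof (intro allI impI)
    fix a b assume ab: "a < n" "b < n" "a < Suc k \<or> b < Suc k"
    show "B1 $$ (a, b) = (if a = b then 1 else 0)"
    proof (cases "a = k")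
      case ak: True
      show ?thesis
      proof (cases "b = k")
        case True
        have "B1 $$ (a,b) = lam * (cj lam * d)" using e[OF ab(1,2)] ak True d_def by simp
        also have "\<dots> = (cj lam * lam) * d" by (simp add: mult_ac)
        also have "\<dots> = 1" using lam nz d_def by simp
        finally show ?thesis using ak True by simp
      next
        case False
        have "B $$ (k,b) = 0"
        proof (cases "b < k")
          case True thus ?thesis using gg[of k b] ab kn by simp
        next
          case False2: False thus ?thesis using z False ab by auto
        qed
        thus ?thesis using e[OF ab(1,2)] ak False by simp
      qed
    next
      case ank: False
      show ?thesis
      proof (cases "b = k")
        case True
        have "B $$ (a,k) = 0"
        proof (cases "a < k")
          case True thus ?thesis using gg[of a k] ab kn by simp
        next
          case False
          hence "k < a" using ank by simp
          hence "B $$ (k,a) = 0" using z ab by auto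
          thus ?thesis using herm_entry[OF B kn ab(1)] by simp
        qed
        thus ?thesis using e[OF ab(1,2)] ank True by simp
      next
        case False
        hence "a < k \<or> b < k" using ab ank by auto
        thus ?thesis using e[OF ab(1,2)] ank False gg[of a b] ab by simp
      qed
    qed
  qed
  thus ?thesis using c by blast
qed

lemma classify_aux:
  "\<forall>k B. n - k = d \<longrightarrow> k \<le> n \<longrightarrow> B \<in> herm q n \<longrightarrow> good n k B \<longrightarrow> (\<exists>m\<le>n. cong_to n B (Dm n m))"
proof (induction d)
  case 0
  show ?case
  proof (intro allI impI)
    fix k and B :: "'a mat" assume k: "n - k = 0" "k \<le> n" and B: "B \<in> herm q n" and g: "good n k B"
    have Bc: "B \<in> carrier_mat n n" using B herm_carrier by auto
    have "B = Dm n n"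
    proof (rule eq_matI)
      fix i j assume "i < dim_row (Dm n n :: 'a mat)" "j < dim_col (Dm n n :: 'a mat)"
      hence ij: "i < n" "j < n" by auto
      thus "B $$ (i,j) = Dm n n $$ (i,j)" using g k unfolding good_def by auto
    qed (use Bc in auto)
    thus "\<exists>m\<le>n. cong_to n B (Dm n m)" using cong_to_refl[OF Bc] by auto
  qed
next
  case (Suc d)
  show ?case
  proof (intro allI impI)
    fix k and B :: "'a mat" assume k: "n - k = Suc d" "k \<le> n" and B: "B \<in> herm q n" and g: "good n k B"
    have Bc: "B \<in> carrier_mat n n" using B herm_carrier by auto
    have kn: "k < n" using k by auto
    show "\<exists>m\<le>n. cong_to n B (Dm n m)"
    proof (cases "\<exists>i j. k \<le> i \<and> i < n \<and> k \<le> j \<and> j < n \<and> B $$ (i,j) \<noteq> 0")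
      case False
      have "B = Dm n k"
      proof (rule eq_matI)
        fix i j assume "i < dim_row (Dm n k :: 'a mat)" "j < dim_col (Dm n k :: 'a mat)"
        hence ij: "i < n" "j < n" by auto
        show "B $$ (i,j) = Dm n k $$ (i,j)"
        proof (cases "i < k \<or> j < k")
          case True thus ?thesis using g ij unfolding good_def by auto
        next
          case False2: False thus ?thesis using False ij by auto
        qed
      qed (use Bc in auto)
      thus ?thesis using cong_to_refl[OF Bc] k by auto
    next
      case True
      then obtain i j where ij: "k \<le> i" "i < n" "k \<le> j" "j < n" "B $$ (i,j) \<noteq> 0" by blast
      from step_diag_nonzero[OF B g ij] obtain B1 where B1: "cong_to n B B1" "good n k B1" "B1 $$ (k,k) \<noteq> 0" by blast
      have B1h: "B1 \<in> herm q n" using cong_to_herm[OF B B1(1)] .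
      have B1c: "B1 \<in> carrier_mat n n" using B1h herm_carrier by auto
      from step_elim[OF B1h B1(2) kn B1(3)] obtain B2 where
        B2: "cong_to n B1 B2" "good n k B2" "B2 $$ (k,k) = B1 $$ (k,k)" "\<forall>j. k < j \<and> j < n \<longrightarrow> B2 $$ (k,j) = 0" by blast
      have B2h: "B2 \<in> herm q n" using cong_to_herm[OF B1h B2(1)] .
      have B2c: "B2 \<in> carrier_mat n n" using B2h herm_carrier by auto
      have "B2 $$ (k,k) \<noteq> 0" using B2(3) B1(3) by simp
      from step_scale[OF B2h B2(2) kn this B2(4)] obtain B3 where B3: "cong_to n B2 B3" "good n (Suc k) B3" by blast
      have B3h: "B3 \<in> herm q n" using cong_to_herm[OF B2h B3(1)] .
      have "n - Suc k = d" "Suc k \<le> n" using k kn by auto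
      then obtain m where m: "m \<le> n" "cong_to n B3 (Dm n m)" using Suc.IH B3h B3(2) by blast
      have "cong_to n B B2" using cong_to_trans[OF Bc B1(1) B2(1)] .
      hence "cong_to n B B3" using cong_to_trans[OF Bc _ B3(1)] by blast
      hence "cong_to n B (Dm n m)" using cong_to_trans[OF Bc _ m(2)] by blast
      thus ?thesis using m(1) by blast
    qed
  qed
qed

lemma classify: fixes B :: "'a mat" assumes "B \<in> herm q n" shows "\<exists>m\<le>n. cong_to n B (Dm n m)"
proof -
  have "good n 0 B" unfolding good_def by auto
  moreover have "\<forall>k B. n - k = n \<longrightarrow> k \<le> n \<longrightarrow> B \<in> herm q n \<longrightarrow> good n k B \<longrightarrow> (\<exists>m\<le>n. cong_to n B (Dm n m))"
    by (rule classify_aux)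
  ultimately show ?thesis using assms by (metis diff_zero le0)
qed

lemma Ssum_rank: fixes B B' :: "'a mat" assumes B: "B \<in> herm q n" and B': "B' \<in> herm q n" and r: "mat_rank n B = mat_rank n B'"
  shows "Ssum q n \<chi> B = Ssum q n \<chi> B'"
proof -
  obtain m P where mP: "m \<le> n" "invm n P" "Dm n m = ct P * B * P"
    using classify[OF B] unfolding cong_to_def by blast
  obtain m' P' where mP': "m' \<le> n" "invm n P'" "Dm n m' = ct P' * B' * P'"
    using classify[OF B'] unfolding cong_to_def by blast
  have "m = mat_rank n B" using rank_Dm[OF mP(1)] rank_cong[OF herm_carrier[OF B] mP(2)] mP(3) by metis
  moreover have "m' = mat_rank n B'" using rank_Dm[OF mP'(1)] rank_cong[OF herm_carrier[OF B'] mP'(2)] mP'(3) by metis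
  ultimately have "m = m'" using r by simp
  have "Ssum q n \<chi> B = Ssum q n \<chi> (Dm n m)" using Ssum_cong[OF B mP(2)] mP(3) by simp
  also have "\<dots> = Ssum q n \<chi> (Dm n m')" using \<open>m = m'\<close> by simp
  also have "\<dots> = Ssum q n \<chi> B'" using Ssum_cong[OF B' mP'(2)] mP'(3) by simp
  finally show ?thesis .
qed

end


lemma finite_carrier_mat: "finite (carrier_mat n m :: 'a::finite mat set)"
proof -
  have "carrier_mat n m \<subseteq> (\<lambda>f. mat n m f) ` (\<Pi>\<^sub>E ij \<in> {..<n} \<times> {..<m}. (UNIV :: 'a set))"
  proof
    fix A :: "'a mat" assume A: "A \<in> carrier_mat n m"
    have "A = mat n m (restrict (\<lambda>ij. A $$ ij) ({..<n} \<times> {..<m}))"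
      using A by (intro eq_matI) auto
    moreover have "restrict (\<lambda>ij. A $$ ij) ({..<n} \<times> {..<m}) \<in> (\<Pi>\<^sub>E ij \<in> {..<n} \<times> {..<m}. (UNIV :: 'a set))"
      by simp
    ultimately show "A \<in> (\<lambda>f. mat n m f) ` (\<Pi>\<^sub>E ij \<in> {..<n} \<times> {..<m}. (UNIV :: 'a set))"
      by (rule image_eqI)
  qed
  moreover have "finite ((\<lambda>f. mat n m f) ` (\<Pi>\<^sub>E ij \<in> {..<n} \<times> {..<m}. (UNIV :: 'a set)))"
    by (intro finite_imageI finite_PiE) auto
  ultimately show ?thesis by (rule finite_subset)
qed

lemma mat_trace_add: assumes "A \<in> carrier_mat n n" "B \<in> carrier_mat n n"
  shows "mat_trace (A + B) = mat_trace A + mat_trace B"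
  unfolding mat_trace_def using assms by (simp add: sum.distrib)

context hs begin

abbreviation MM :: "nat \<Rightarrow> 'a mat set" where "MM n \<equiv> zero_diag_herm q n"

lemma finite_herm: "finite (herm q n :: 'a mat set)"
  by (rule finite_subset[OF _ finite_carrier_mat[of n n]]) (auto simp: herm_def)

lemma finite_herm_rank: "finite (herm_rank q n k :: 'a mat set)"
  by (rule finite_subset[OF _ finite_herm[of n]]) (auto simp: herm_rank_def)

lemma M_herm: "X \<in> MM n \<Longrightarrow> X \<in> herm q n"
  unfolding zero_diag_herm_def by auto

lemma finite_M: "finite (MM n :: 'a mat set)"
  by (rule finite_subset[OF _ finite_herm[of n]]) (auto simp: zero_diag_herm_def)

lemma M_zero: "(0\<^sub>m n n :: 'a mat) \<in> MM n"
  unfolding zero_diag_herm_def by (auto intro!: hermI)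

lemma M_add: fixes X Y :: "'a mat" assumes "X \<in> MM n" "Y \<in> MM n"
  shows "X + Y \<in> MM n"
proof -
  have X: "X \<in> herm q n" "\<forall>i<n. X $$ (i,i) = 0" and Y: "Y \<in> herm q n" "\<forall>i<n. Y $$ (i,i) = 0"
    using assms unfolding zero_diag_herm_def by auto
  have c: "X \<in> carrier_mat n n" "Y \<in> carrier_mat n n" using X Y herm_carrier by auto
  have "X + Y \<in> herm q n"
    by (rule hermI) (use c X Y herm_entry in auto)
  thus ?thesis unfolding zero_diag_herm_def using X Y c by auto
qed

lemma M_minus: fixes X Y :: "'a mat" assumes "X \<in> MM n" "Y \<in> MM n"
  shows "X - Y \<in> MM n"
proof -
  have X: "X \<in> herm q n" "\<forall>i<n. X $$ (i,i) = 0" and Y: "Y \<in> herm q n" "\<forall>i<n. Y $$ (i,i) = 0"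
    using assms unfolding zero_diag_herm_def by auto
  have c: "X \<in> carrier_mat n n" "Y \<in> carrier_mat n n" using X Y herm_carrier by auto
  have "X - Y \<in> herm q n" by (rule herm_minus[OF X(1) Y(1)])
  thus ?thesis unfolding zero_diag_herm_def using X Y c by auto
qed

lemma chi_0: fixes \<chi> :: "'a \<Rightarrow> complex" assumes "nontrivial_add_char q \<chi>" shows "\<chi> 0 = 1"
proof -
  have z: "(0::'a) \<in> Fq q" by (simp add: Fq_iff)
  have "\<chi> (0 + 0) = \<chi> 0 * \<chi> 0" using assms z unfolding nontrivial_add_char_def by blast
  moreover have "\<chi> 0 \<noteq> 0" using assms z unfolding nontrivial_add_char_def by blast
  ultimately show ?thesis by simp
qed

definition diagm :: "nat \<Rightarrow> 'a mat \<Rightarrow> bool" where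
  "diagm n A \<longleftrightarrow> (\<forall>i<n. \<forall>j<n. i \<noteq> j \<longrightarrow> A $$ (i,j) = 0)"

lemma trace_AZ: assumes "A \<in> carrier_mat n n" "Z \<in> carrier_mat n n"
  shows "mat_trace (A * Z) = (\<Sum>i<n. \<Sum>l<n. A $$ (i,l) * Z $$ (l,i))"
  unfolding mat_trace_def using assms by (auto simp: scalar_prod_def atLeast0LessThan intro!: sum.cong)

lemma charsum_diag: fixes \<chi> :: "'a \<Rightarrow> complex" and A :: "'a mat" assumes chi: "nontrivial_add_char q \<chi>" and A: "A \<in> herm q n" and d: "diagm n A"
  shows "(\<Sum>Z\<in>MM n. \<chi> (mat_trace (A * Z))) = of_nat (card (MM n))"
proof -
  have "mat_trace (A * Z) = 0" if Z: "Z \<in> MM n" for Z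
  proof -
    have Zc: "Z \<in> carrier_mat n n" using M_herm[OF Z] herm_carrier by auto
    have Zd: "\<forall>i<n. Z $$ (i,i) = 0" using Z unfolding zero_diag_herm_def by auto
    have "mat_trace (A * Z) = (\<Sum>i<n. \<Sum>l<n. A $$ (i,l) * Z $$ (l,i))"
      by (rule trace_AZ[OF herm_carrier[OF A] Zc])
    also have "\<dots> = 0"
      using d Zd unfolding diagm_def by (intro sum.neutral ballI) (metis lessThan_iff mult_zero_left mult_zero_right)
    finally show ?thesis .
  qed
  hence "(\<Sum>Z\<in>MM n. \<chi> (mat_trace (A * Z))) = (\<Sum>Z\<in>MM n. (1::complex))"
    using chi_0[OF chi] by (intro sum.cong) auto
  thus ?thesis by simp
qed

lemma charsum_nondiag: fixes \<chi> :: "'a \<Rightarrow> complex" and A :: "'a mat" assumes chi: "nontrivial_add_char q \<chi>" and A: "A \<in> herm q n" and d: "\<not> diagm n A"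
  shows "(\<Sum>Z\<in>MM n. \<chi> (mat_trace (A * Z))) = 0"
proof -
  have Ac: "A \<in> carrier_mat n n" using A herm_carrier by auto
  obtain i j where ij: "i < n" "j < n" "i \<noteq> j" "A $$ (i,j) \<noteq> 0" using d unfolding diagm_def by auto
  obtain x where x: "x \<in> Fq q" "\<chi> x \<noteq> 1" using chi unfolding nontrivial_add_char_def by auto
  obtain y where y: "y + cj y = x" using x(1) tr_surj by (metis (no_types, lifting) imageE)
  define w where "w = y / A $$ (i,j)"
  define Z0 where "Z0 = mat n n (\<lambda>(a,l). (if a = j \<and> l = i then w else 0) + (if a = i \<and> l = j then cj w else 0))"
  have Z0c: "Z0 \<in> carrier_mat n n" unfolding Z0_def by auto
  have Z0e: "Z0 $$ (a,l) = (if a = j \<and> l = i then w else 0) + (if a = i \<and> l = j then cj w else 0)"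
    if "a < n" "l < n" for a l unfolding Z0_def using that by auto
  have Z0M: "Z0 \<in> MM n"
  proof -
    have "Z0 \<in> herm q n"
      by (rule hermI[OF Z0c]) (use ij in \<open>auto simp: Z0e\<close>)
    moreover have "\<forall>a<n. Z0 $$ (a,a) = 0" using ij by (auto simp: Z0e)
    ultimately show ?thesis unfolding zero_diag_herm_def using Z0c by auto
  qed
  have trZ0: "mat_trace (A * Z0) = x"
  proof -
    have "mat_trace (A * Z0) = (\<Sum>a<n. \<Sum>l<n. A $$ (a,l) * Z0 $$ (l,a))" by (rule trace_AZ[OF Ac Z0c])
    also have "\<dots> = (\<Sum>a<n. \<Sum>l<n. (if l = j then (if a = i then A $$ (i,j) * w else 0) else 0)
                                  + (if l = i then (if a = j then A $$ (j,i) * cj w else 0) else 0))"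
      by (intro sum.cong refl) (use ij in \<open>auto simp: Z0e distrib_left\<close>)
    also have "\<dots> = (\<Sum>a<n. (if a = i then A $$ (i,j) * w else 0) + (if a = j then A $$ (j,i) * cj w else 0))"
      by (intro sum.cong refl) (use ij in \<open>simp add: sum.distrib\<close>)
    also have "\<dots> = A $$ (i,j) * w + A $$ (j,i) * cj w"
      using ij by (simp add: sum.distrib)
    also have "A $$ (j,i) = cj (A $$ (i,j))" using herm_entry[OF A ij(1,2)] by simp
    also have "A $$ (i,j) * w = y" unfolding w_def using ij by simp
    also have "cj (A $$ (i,j)) * cj w = cj y" unfolding w_def using ij by simp
    finally show ?thesis using y by simp
  qed
  let ?S = "(\<Sum>Z\<in>MM n. \<chi> (mat_trace (A * Z)))"
  have "?S = (\<Sum>Z\<in>MM n. \<chi> (mat_trace (A * (Z + Z0))))"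
  proof (rule sum.reindex_bij_witness[where i = "\<lambda>Z. Z + Z0" and j = "\<lambda>Z. Z - Z0"])
    fix Z :: "'a mat" assume Z: "Z \<in> MM n"
    have Zc: "Z \<in> carrier_mat n n" using M_herm[OF Z] herm_carrier by auto
    have e: "Z - Z0 + Z0 = Z" using Zc Z0c by (intro eq_matI) auto
    show "Z - Z0 + Z0 = Z" by (rule e)
    show "Z - Z0 \<in> MM n" by (rule M_minus[OF Z Z0M])
    show "\<chi> (mat_trace (A * (Z - Z0 + Z0))) = \<chi> (mat_trace (A * Z))" unfolding e ..
  next
    fix Z :: "'a mat" assume Z: "Z \<in> MM n"
    have Zc: "Z \<in> carrier_mat n n" using M_herm[OF Z] herm_carrier by auto
    show "Z + Z0 - Z0 = Z" using Zc Z0c by (intro eq_matI) auto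
    show "Z + Z0 \<in> MM n" by (rule M_add[OF Z Z0M])
  qed
  also have "\<dots> = (\<Sum>Z\<in>MM n. \<chi> x * \<chi> (mat_trace (A * Z)))"
  proof (intro sum.cong refl)
    fix Z :: "'a mat" assume Z: "Z \<in> MM n"
    have Zc: "Z \<in> carrier_mat n n" using M_herm[OF Z] herm_carrier by auto
    have "mat_trace (A * (Z + Z0)) = mat_trace (A * Z) + mat_trace (A * Z0)"
      using Ac Zc Z0c by (simp add: mult_add_distrib_mat[OF Ac Zc Z0c] mat_trace_add[of _ n])
    hence "mat_trace (A * (Z + Z0)) = mat_trace (A * Z) + x" using trZ0 by simp
    moreover have "mat_trace (A * Z) \<in> Fq q" unfolding Fq_iff by (rule trace_herm_Fq[OF A M_herm[OF Z]])
    ultimately show "\<chi> (mat_trace (A * (Z + Z0))) = \<chi> x * \<chi> (mat_trace (A * Z))"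
      using chi x(1) unfolding nontrivial_add_char_def by (simp add: mult.commute)
  qed
  also have "\<dots> = \<chi> x * ?S" by (simp add: sum_distrib_left)
  finally have "(1 - \<chi> x) * ?S = 0" by (simp add: algebra_simps)
  thus ?thesis using x(2) by simp
qed

end


context hs begin

lemma sum_M_Ssum:
  fixes \<chi> :: "'a \<Rightarrow> complex"
  assumes chi: "nontrivial_add_char q \<chi>"
  shows "(\<Sum>Z\<in>MM n. Ssum q n \<chi> Z) = of_nat (card (MM n)) * of_nat (card {A \<in> herm_rank q n 1. diagm n A})"
proof -
  have "(\<Sum>Z\<in>MM n. Ssum q n \<chi> Z) = (\<Sum>A\<in>herm_rank q n 1. \<Sum>Z\<in>MM n. pairing q \<chi> A Z)"
    unfolding Ssum_def by (rule sum.swap)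
  also have "\<dots> = (\<Sum>A\<in>herm_rank q n 1. if diagm n A then of_nat (card (MM n)) else 0)"
  proof (intro sum.cong refl)
    fix A :: "'a mat" assume A: "A \<in> herm_rank q n 1"
    have Ah: "A \<in> herm q n" using A unfolding herm_rank_def by auto
    have "(\<Sum>Z\<in>MM n. pairing q \<chi> A Z) = (\<Sum>Z\<in>MM n. \<chi> (mat_trace (A * Z)))"
      using pairing_herm[OF Ah] by simp
    also have "\<dots> = (if diagm n A then of_nat (card (MM n)) else 0)"
      using charsum_diag[OF chi Ah] charsum_nondiag[OF chi Ah] by auto
    finally show "(\<Sum>Z\<in>MM n. pairing q \<chi> A Z) = (if diagm n A then of_nat (card (MM n)) else 0)" .
  qed
  also have "\<dots> = (\<Sum>A\<in>{A \<in> herm_rank q n 1. diagm n A}. of_nat (card (MM n)))"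
    by (rule sum.inter_filter[symmetric]) (rule finite_herm_rank)
  also have "\<dots> = of_nat (card (MM n)) * of_nat (card {A \<in> herm_rank q n 1. diagm n A})"
    by (simp add: mult.commute)
  finally show ?thesis .
qed

lemma rank_le_n: "X \<in> carrier_mat n n \<Longrightarrow> mat_rank n X \<le> n"
  unfolding mat_rank_def by (rule vec_space.rank_le_nc)

lemma dual1:
  fixes \<chi> :: "'a \<Rightarrow> complex"
  assumes chi: "nontrivial_add_char q \<chi>"
  shows "dual_inner_dist q n \<chi> (MM n) 1 = of_nat (card (MM n)) * of_nat (card {A \<in> herm_rank q n 1. diagm n A})"
proof -
  define C where "C = (\<lambda>i. {(X, Y). X \<in> MM n \<and> Y \<in> MM n \<and> mat_rank n (X - Y) = i})"
  define f where "f = (\<lambda>p :: 'a mat \<times> 'a mat. Ssum q n \<chi> (fst p - snd p))"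
  have cM: "card (MM n) > 0" using M_zero finite_M by (metis card_gt_0_iff empty_iff)
  have eq_i: "Qnum q n \<chi> 1 i * of_nat (card (C i)) = (\<Sum>p\<in>C i. f p)" for i
  proof (cases "C i = {}")
    case True thus ?thesis by simp
  next
    case False
    then obtain X0 Y0 where p0: "X0 \<in> MM n" "Y0 \<in> MM n" "mat_rank n (X0 - Y0) = i" unfolding C_def by auto
    have "X0 - Y0 \<in> herm_rank q n i" using p0 herm_minus M_herm unfolding herm_rank_def by auto
    hence Bin: "(SOME B. B \<in> (herm_rank q n i :: 'a mat set)) \<in> herm_rank q n i" by (rule someI)
    define B where "B = (SOME B. B \<in> (herm_rank q n i :: 'a mat set))"
    have Bh: "B \<in> herm q n" "mat_rank n B = i" using Bin unfolding B_def herm_rank_def by auto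
    have Q: "Qnum q n \<chi> 1 i = Ssum q n \<chi> B" unfolding Qnum_def Ssum_def Let_def B_def ..
    have "(\<Sum>p\<in>C i. f p) = (\<Sum>p\<in>C i. Ssum q n \<chi> B)"
    proof (intro sum.cong refl)
      fix p assume p: "p \<in> C i"
      obtain X Y where XY: "p = (X, Y)" "X \<in> MM n" "Y \<in> MM n" "mat_rank n (X - Y) = i" using p unfolding C_def by auto
      have "X - Y \<in> herm q n" using XY herm_minus M_herm by auto
      thus "f p = Ssum q n \<chi> B" unfolding f_def XY(1) using Ssum_rank[OF _ Bh(1)] XY Bh(2) by simp
    qed
    thus ?thesis using Q by (simp add: mult.commute)
  qed
  have finC: "finite (MM n \<times> MM n)" using finite_M by auto
  have "dual_inner_dist q n \<chi> (MM n) 1 = (\<Sum>i\<le>n. Qnum q n \<chi> 1 i * of_nat (card (C i)) / of_nat (card (MM n)))"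
    unfolding dual_inner_dist_def inner_dist_def C_def by (simp add: of_real_divide)
  also have "\<dots> = (\<Sum>i\<le>n. \<Sum>p\<in>C i. f p) / of_nat (card (MM n))"
    unfolding eq_i by (simp add: sum_divide_distrib)
  also have "(\<Sum>i\<le>n. \<Sum>p\<in>C i. f p) = (\<Sum>i\<in>{..n}. \<Sum>p\<in>{p \<in> MM n \<times> MM n. mat_rank n (fst p - snd p) = i}. f p)"
    unfolding C_def by (intro sum.cong refl) (auto intro: sum.cong)
  also have "\<dots> = (\<Sum>p\<in>MM n \<times> MM n. f p)"
  proof (rule sum.group[OF finC])
    show "finite {..n}" by simp
    show "(\<lambda>p. mat_rank n (fst p - snd p)) ` (MM n \<times> MM n) \<subseteq> {..n}"
    proof
      fix r assume "r \<in> (\<lambda>p. mat_rank n (fst p - snd p)) ` (MM n \<times> MM n)"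
      then obtain X Y where XY: "X \<in> MM n" "Y \<in> MM n" "r = mat_rank n (X - Y)" by auto
      have "X - Y \<in> carrier_mat n n" using herm_carrier[OF herm_minus[OF M_herm[OF XY(1)] M_herm[OF XY(2)]]] .
      thus "r \<in> {..n}" using rank_le_n XY(3) by auto
    qed
  qed
  also have "\<dots> = (\<Sum>X\<in>MM n. \<Sum>Y\<in>MM n. Ssum q n \<chi> (X - Y))"
    unfolding f_def by (simp add: sum.cartesian_product split_def)
  also have "\<dots> = (\<Sum>Y\<in>MM n. \<Sum>X\<in>MM n. Ssum q n \<chi> (X - Y))" by (rule sum.swap)
  also have "\<dots> = (\<Sum>Y\<in>MM n. \<Sum>Z\<in>MM n. Ssum q n \<chi> Z)"
  proof (rule sum.cong[OF refl])
    fix Y :: "'a mat" assume Y: "Y \<in> MM n"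
    have Yc: "Y \<in> carrier_mat n n" using M_herm[OF Y] herm_carrier by auto
    show "(\<Sum>X\<in>MM n. Ssum q n \<chi> (X - Y)) = (\<Sum>Z\<in>MM n. Ssum q n \<chi> Z)"
    proof (rule sum.reindex_bij_witness[where i = "\<lambda>Z. Z + Y" and j = "\<lambda>X. X - Y"])
      fix X :: "'a mat" assume X: "X \<in> MM n"
      have Xc: "X \<in> carrier_mat n n" using M_herm[OF X] herm_carrier by auto
      show "X - Y + Y = X" using Xc Yc by (intro eq_matI) auto
      show "X - Y \<in> MM n" by (rule M_minus[OF X Y])
      show "Ssum q n \<chi> (X - Y) = Ssum q n \<chi> (X - Y)" ..
    next
      fix Z :: "'a mat" assume Z: "Z \<in> MM n"
      have Zc: "Z \<in> carrier_mat n n" using M_herm[OF Z] herm_carrier by auto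
      show "Z + Y - Y = Z" using Zc Yc by (intro eq_matI) auto
      show "Z + Y \<in> MM n" by (rule M_add[OF Z Y])
    qed
  qed
  also have "\<dots> = of_nat (card (MM n)) * (\<Sum>Z\<in>MM n. Ssum q n \<chi> Z)" by simp
  finally show ?thesis unfolding sum_M_Ssum[OF chi] using cM by simp
qed

lemma D1_diag: assumes "1 \<le> n" shows "Dm n 1 \<in> {A \<in> herm_rank q n 1. diagm n A}"
proof -
  have "(Dm n 1 :: 'a mat) \<in> herm q n" by (rule hermI) auto
  moreover have "mat_rank n (Dm n 1 :: 'a mat) = 1" by (rule rank_Dm[OF assms])
  moreover have "diagm n (Dm n 1 :: 'a mat)" unfolding diagm_def by auto
  ultimately show ?thesis unfolding herm_rank_def by auto
qed

lemma dual1_nonzero: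
  fixes \<chi> :: "'a \<Rightarrow> complex"
  assumes chi: "nontrivial_add_char q \<chi>" and n: "1 \<le> n"
  shows "dual_inner_dist q n \<chi> (MM n) 1 \<noteq> 0"
proof -
  have cM: "card (MM n) > 0" using M_zero finite_M by (metis card_gt_0_iff empty_iff)
  have fin: "finite {A \<in> herm_rank q n 1. diagm n A}" using finite_herm_rank by auto
  have "card {A \<in> herm_rank q n 1. diagm n A} > 0" using D1_diag[OF n] fin card_gt_0_iff by blast
  thus ?thesis unfolding dual1[OF chi] using cM by simp
qed

end


theorem theorem5p5:
  fixes q n :: nat and \<chi> :: "'a::{field,finite} \<Rightarrow> complex"
  assumes "\<exists>p k. prime p \<and> k > 0 \<and> q = p ^ k"
    and "card (UNIV :: 'a set) = q ^ 2"
    and "n \<ge> 2"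
    and "nontrivial_add_char q \<chi>"
  shows "\<forall>t. 1 \<le> t \<and> t \<le> n \<longrightarrow> \<not> is_t_design q n \<chi> t (zero_diag_herm q n :: 'a mat set)"
proof -
  obtain p k where pk: "prime p" "k > 0" "q = p ^ k" using assms(1) by auto
  have p2: "2 \<le> p" using pk(1) prime_ge_2_nat by blast
  have "p \<le> p ^ k" using pk(2) p2 by (simp add: self_le_power)
  hence q2: "2 \<le> q" using p2 pk(3) by simp
  have Cpos: "CHAR('a) > 0" by (rule finite_imp_CHAR_pos) simp
  have Cprime: "prime CHAR('a)" by (rule prime_CHAR_semidom[OF Cpos])
  have "CHAR('a) dvd card (UNIV :: 'a set)" by (rule CHAR_dvd_CARD)
  hence "CHAR('a) dvd p ^ (k * 2)" using assms(2) pk(3) by (simp add: power_mult)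
  hence "CHAR('a) dvd p" using Cprime prime_dvd_power by blast
  hence CH: "CHAR('a) = p" using Cprime pk(1) by (simp add: primes_dvd_imp_eq)
  have frob: "(x + y) ^ q = x ^ q + y ^ q" for x y :: 'a
    by (rule freshmans_dream'[OF Cprime]) (simp add: CH pk(3))
  interpret H: hs q "TYPE('a)"
    by unfold_locales (use q2 frob assms(2) in \<open>auto simp: power2_eq_square\<close>)
  show ?thesis
  proof (intro allI impI notI)
    fix t assume t: "1 \<le> t \<and> t \<le> n" and des: "is_t_design q n \<chi> t (zero_diag_herm q n :: 'a mat set)"
    have "dual_inner_dist q n \<chi> (zero_diag_herm q n :: 'a mat set) 1 = 0"
      using des t unfolding is_t_design_def by auto
    moreover have "dual_inner_dist q n \<chi> (zero_diag_herm q n :: 'a mat set) 1 \<noteq> 0"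
      by (rule H.dual1_nonzero[OF assms(4)]) (use assms(3) in simp)
    ultimately show False by simp
  qed
qed

end
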